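(* Let $T$ be an invertible operator in $\mathcal D(\mathcal P_n)$. Then $$K_h(T)=\varrho[T\phi_n]=d_h\bigl(Z(\phi_n),Z(T\phi_n)\bigr).$$
   Context: Let $n\ge 1$ be an integer and $\mathcal P_n$ the complex vector space of polynomials in one complex variable of degree at most $n$; $\phi_k(z)=z^k/k!$. $D$ is differentiation on $\mathcal P_n$, $I$ the identity, and $\mathcal D(\mathcal P_n)$ the linear span of $I,D,\dots,D^n$. For a nonzero $f$, $Z(f)$ is the multiset of roots of $f$ (with multiplicity; empty for nonzero constants); $Z(0)=\mathbb C$. For nonconstant $f$, the root radius is $\varrho[f]=\max\{|u|:u\in Z(f)\}$. For finite nonempty $A,B\subset\mathbb C$, $d_h(A,B)=\max_{y\in B}\min_{x\in A}|x-y|$, with conventions $d_h(\emptyset,\emptyset)=0$, $d_h(A,\emptyset)=d_h(\emptyset,A)=+\infty$ for $A\ne\emptyset$, and $d_h(A,B)=0$ if one of $A,B$ equals $\mathbb C$ and the other is nonempty. $K_h(T)=\sup_{f\in\mathcal P_n}d_h(Z(f),Z(Tf))$. *)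

theory Defs
  imports "HOL-Analysis.Analysis" "HOL-Computational_Algebra.Polynomial"
          "HOL-Library.Extended_Real"
begin

definition Pn :: "nat \<Rightarrow> complex poly set" where
  "Pn n = {p. degree p \<le> n}"

definition phi :: "nat \<Rightarrow> complex poly" where
  "phi k = monom (1 / of_nat (fact k)) k"

definition Dop :: "nat \<Rightarrow> (nat \<Rightarrow> complex) \<Rightarrow> complex poly \<Rightarrow> complex poly" where
  "Dop n a f = (\<Sum>k\<le>n. smult (a k) ((pderiv ^^ k) f))"

text \<open>Zero set (underlying set of the root multiset); Z 0 = UNIV, empty for nonzero constants.\<close>
definition Z :: "complex poly \<Rightarrow> complex set" where
  "Z f = {z. poly f z = 0}"

text \<open>Root radius of a nonconstant polynomial.\<close>
definition rootrad :: "complex poly \<Rightarrow> real" where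
  "rootrad f = Max (cmod ` Z f)"

definition dh :: "complex set \<Rightarrow> complex set \<Rightarrow> ereal" where
  "dh A B =
     (if A = {} \<and> B = {} then 0
      else if A = {} \<or> B = {} then \<infinity>
      else if A = UNIV \<or> B = UNIV then 0
      else ereal (Max ((\<lambda>y. Min ((\<lambda>x. cmod (x - y)) ` A)) ` B)))"

definition Kh :: "nat \<Rightarrow> (complex poly \<Rightarrow> complex poly) \<Rightarrow> ereal" where
  "Kh n T = (SUP f\<in>Pn n. dh (Z f) (Z (T f)))"

end

theory Submission
  imports Defs "HOL-Computational_Algebra.Fundamental_Theorem_Algebra"
begin


lemma disc_ident_real:
  fixes a b x y R A :: real
  assumes "A = a^2 + b^2 - R ^ 2" "A \<noteq> 0"
  shows "(a * x - b * y - 1)^2 + (a * y + b * x)^2 - R^2 * (x^2+y^2) = A * ((x - a / A)^2 + (y + b / A)^2 - R ^ 2 / A ^ 2)"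
proof -
  have l: "(a * x - b * y - 1)^2 + (a * y + b * x)^2 - R^2 * (x^2+y^2) = (a^2+b^2-R^2)*(x^2+y^2) - 2*(a*x - b*y) + 1"
    by (simp add: power2_eq_square algebra_simps)
  have r: "A * ((x - a / A)^2 + (y + b / A)^2 - R ^ 2 / A ^ 2) = A*(x^2+y^2) - 2*(a*x-b*y) + (a^2+b^2-R^2)/A"
    using assms(2) by (simp add: power2_eq_square field_simps)
  show ?thesis unfolding l r using assms by simp
qed

lemma disc_ident:
  fixes \<zeta> w :: complex and R A :: real
  assumes "A = cmod \<zeta> ^ 2 - R ^ 2" "A \<noteq> 0"
  shows "cmod (\<zeta> * w - 1) ^ 2 - R ^ 2 * cmod w ^ 2 = A * (cmod (w - cnj \<zeta> / of_real A) ^ 2 - R ^ 2 / A ^ 2)"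
proof -
  have "cmod (\<zeta> * w - 1) ^ 2 = (Re \<zeta> * Re w - Im \<zeta> * Im w - 1)^2 + (Re \<zeta> * Im w + Im \<zeta> * Re w)^2"
    by (simp add: cmod_power2)
  moreover have "cmod (w - cnj \<zeta> / of_real A) ^ 2 = (Re w - Re \<zeta> / A)^2 + (Im w + Im \<zeta> / A)^2"
    by (simp add: cmod_power2 Re_divide_of_real Im_divide_of_real)
  moreover have "cmod \<zeta> ^ 2 = Re \<zeta> ^2 + Im \<zeta> ^ 2" "cmod w ^ 2 = Re w ^2 + Im w ^ 2"
    by (simp_all add: cmod_power2)
  ultimately show ?thesis using assms disc_ident_real[of A "Re \<zeta>" "Im \<zeta>" R "Re w" "Im w"]
    by simp
qed

lemma key_disc:
  fixes r :: "nat \<Rightarrow> complex" and R :: real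
  assumes d: "d \<ge> 1" and rR: "\<forall>i<d. cmod (r i) \<le> R" and zR: "R < cmod \<zeta>"
    and S: "(\<Sum>i<d. 1 / (\<zeta> - r i)) = of_nat d * \<beta>"
  shows "\<beta> \<noteq> 0 \<and> cmod (\<zeta> - 1 / \<beta>) \<le> R"
proof -
  have R0: "R \<ge> 0" using rR d by (metis less_le_trans norm_ge_zero order_trans zero_less_one)
  define A where "A = cmod \<zeta> ^ 2 - R ^ 2"
  have A0: "A > 0" unfolding A_def using R0 zR by (simp add: power_strict_mono)
  define c0 where "c0 = cnj \<zeta> / of_real A"
  define w where "w i = 1 / (\<zeta> - r i)" for i
  have wi: "cmod (w i - c0) \<le> R / A" if "i < d" for i
  proof -
    have ne: "\<zeta> - r i \<noteq> 0" using rR that zR by force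
    have "\<zeta> * w i - 1 = r i * w i" unfolding w_def using ne by (simp add: field_simps)
    hence "cmod (\<zeta> * w i - 1) \<le> R * cmod (w i)" using rR that by (simp add: norm_mult mult_right_mono)
    hence "cmod (\<zeta> * w i - 1) ^ 2 \<le> (R * cmod (w i)) ^ 2" by (simp add: power_mono)
    hence "A * (cmod (w i - c0) ^ 2 - R ^ 2 / A ^ 2) \<le> 0"
      using disc_ident[OF A_def, of "w i"] A0 unfolding c0_def by (simp add: power_mult_distrib)
    hence "cmod (w i - c0) ^ 2 \<le> (R / A) ^ 2" using A0 by (simp add: mult_le_0_iff power_divide)
    thus ?thesis using R0 A0 by (simp add: power2_le_iff_abs_le)
  qed
  have beta: "\<beta> = (\<Sum>i<d. w i) / of_nat d" using S d unfolding w_def by (simp add: field_simps)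
  have "\<beta> - c0 = (\<Sum>i<d. (w i - c0)) / of_nat d" using d unfolding beta by (simp add: sum_subtractf field_simps)
  hence "cmod (\<beta> - c0) \<le> (\<Sum>i<d. cmod (w i - c0)) / of_nat d"
    by (simp add: norm_divide norm_sum divide_right_mono)
  also have "\<dots> \<le> (\<Sum>i<d. R / A) / of_nat d" by (intro divide_right_mono sum_mono) (auto simp: wi)
  also have "\<dots> = R / A" using d by simp
  finally have bc: "cmod (\<beta> - c0) \<le> R / A" .
  hence "cmod (\<beta> - c0) ^ 2 \<le> (R / A) ^ 2" by (simp add: power_mono)
  hence "A * (cmod (\<beta> - c0) ^ 2 - R ^ 2 / A ^ 2) \<le> 0" using A0 by (simp add: mult_le_0_iff power_divide)
  hence main: "cmod (\<zeta> * \<beta> - 1) ^ 2 \<le> R ^ 2 * cmod \<beta> ^ 2"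
    using disc_ident[OF A_def, of \<beta>] A0 unfolding c0_def by simp
  have bne: "\<beta> \<noteq> 0" using main by (cases "\<beta> = 0") auto
  have "cmod (\<zeta> * \<beta> - 1) \<le> R * cmod \<beta>"
    using main R0 by (metis abs_of_nonneg norm_ge_zero power2_le_iff_abs_le power_mult_distrib zero_le_mult_iff)
  moreover have "\<zeta> - 1 / \<beta> = (\<zeta> * \<beta> - 1) / \<beta>" using bne by (simp add: field_simps)
  ultimately have "cmod (\<zeta> - 1 / \<beta>) \<le> R" using bne by (simp add: norm_divide divide_le_eq)
  thus ?thesis using bne by simp
qed

lemma logderiv:
  fixes r :: "nat \<Rightarrow> complex"
  assumes "\<forall>i<d. r i \<noteq> \<zeta>"
  shows "poly (pderiv (\<Prod>i<d. [:-r i, 1:])) \<zeta> = poly (\<Prod>i<d. [:-r i, 1:]) \<zeta> * (\<Sum>i<d. 1 / (\<zeta> - r i))"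
  using assms
proof (induction d)
  case 0
  then show ?case by simp
next
  case (Suc d)
  hence IH: "poly (pderiv (\<Prod>i<d. [:-r i, 1:])) \<zeta> = poly (\<Prod>i<d. [:-r i, 1:]) \<zeta> * (\<Sum>i<d. 1 / (\<zeta> - r i))" by simp
  have ne: "\<zeta> - r d \<noteq> 0" using Suc.prems by auto
  define Q where "Q = (\<Prod>i<d. [:-r i, 1:])"
  define S where "S = (\<Sum>i<d. 1 / (\<zeta> - r i))"
  have IHQ: "poly (pderiv Q) \<zeta> = poly Q \<zeta> * S" using IH unfolding Q_def S_def .
  have PS: "(\<Prod>i<Suc d. [:-r i, 1:]) = Q * [:-r d, 1:]" unfolding Q_def by simp
  have SS: "(\<Sum>i<Suc d. 1 / (\<zeta> - r i)) = S + 1 / (\<zeta> - r d)" unfolding S_def by simp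
  have pd: "pderiv [:-r d, 1:] = 1" by (simp add: pderiv_pCons)
  have "pderiv (Q * [:-r d, 1:]) = Q + [:-r d, 1:] * pderiv Q"
    by (simp only: pderiv_mult pd mult_1_right)
  hence "poly (pderiv (Q * [:-r d, 1:])) \<zeta> = poly Q \<zeta> + poly [:-r d, 1:] \<zeta> * poly (pderiv Q) \<zeta>"
    by (simp only: poly_add poly_mult)
  also have "poly [:-r d, 1:] \<zeta> = \<zeta> - r d" by simp
  finally have "poly (pderiv (Q * [:-r d, 1:])) \<zeta> = poly Q \<zeta> + (\<zeta> - r d) * (poly Q \<zeta> * S)"
    by (simp only: IHQ)
  also have "\<dots> = poly (Q * [:-r d, 1:]) \<zeta> * (S + 1 / (\<zeta> - r d))"
    using ne by (simp add: field_simps)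
  finally show ?case unfolding PS SS .
qed

lemma root_lemmas:
  fixes p :: "complex poly"
  assumes deg: "degree p \<ge> 1" and nz: "\<forall>z. R < cmod z \<longrightarrow> poly p z \<noteq> 0" and zR: "R < cmod \<zeta>"
  shows "poly (pderiv p) \<zeta> \<noteq> 0"
    and "R < cmod \<alpha> \<Longrightarrow> of_nat (degree p) * poly p \<zeta> + (\<alpha> - \<zeta>) * poly (pderiv p) \<zeta> \<noteq> 0"
proof -
  obtain r where pr: "smult (lead_coeff p) (\<Prod>i<degree p. [:-r i, 1:]) = p"
    using complex_poly_decompose' by blast
  define d where "d = degree p"
  define P where "P = (\<Prod>i<d. [:-r i, 1:])"
  have p0: "p \<noteq> 0" using deg by auto
  hence c0: "lead_coeff p \<noteq> 0" by simp
  have pP: "p = smult (lead_coeff p) P" using pr unfolding P_def d_def by simp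
  have rR: "\<forall>i<d. cmod (r i) \<le> R"
  proof (intro allI impI)
    fix i assume "i < d"
    hence "poly P (r i) = 0" unfolding P_def by (auto simp: poly_prod)
    hence "poly p (r i) = 0" by (subst pP) simp
    thus "cmod (r i) \<le> R" using nz by force
  qed
  have rz: "\<forall>i<d. r i \<noteq> \<zeta>" using rR zR by force
  have Pz: "poly P \<zeta> \<noteq> 0" using nz zR pP c0 by (metis mult_eq_0_iff poly_smult)
  have dP: "poly (pderiv p) \<zeta> = lead_coeff p * poly P \<zeta> * (\<Sum>i<d. 1 / (\<zeta> - r i))"
    by (subst pP) (simp add: pderiv_smult logderiv[OF rz] P_def)
  have d1: "d \<ge> 1" using deg d_def by simp
  show "poly (pderiv p) \<zeta> \<noteq> 0"
  proof
    assume "poly (pderiv p) \<zeta> = 0"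
    hence "(\<Sum>i<d. 1 / (\<zeta> - r i)) = of_nat d * 0" using dP c0 Pz by simp
    from key_disc[OF d1 rR zR this] show False by simp
  qed
  assume aR: "R < cmod \<alpha>"
  show "of_nat (degree p) * poly p \<zeta> + (\<alpha> - \<zeta>) * poly (pderiv p) \<zeta> \<noteq> 0"
  proof
    assume eq: "of_nat (degree p) * poly p \<zeta> + (\<alpha> - \<zeta>) * poly (pderiv p) \<zeta> = 0"
    define S where "S = (\<Sum>i<d. 1 / (\<zeta> - r i))"
    have pz: "poly p \<zeta> = lead_coeff p * poly P \<zeta>" by (metis pP poly_smult)
    have "lead_coeff p * poly P \<zeta> * (of_nat d + (\<alpha> - \<zeta>) * S) = 0"
      using eq unfolding dP pz S_def d_def by (simp add: algebra_simps)
    hence e2: "of_nat d + (\<alpha> - \<zeta>) * S = 0" using c0 Pz by simp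
    have az: "\<alpha> \<noteq> \<zeta>" using e2 d1 by auto
    have "S = of_nat d * (1 / (\<zeta> - \<alpha>))" using e2 az by (simp add: field_simps)
    from key_disc[OF d1 rR zR this[unfolded S_def]] have "cmod (\<zeta> - (\<zeta> - \<alpha>)) \<le> R" by simp
    thus False using aR by simp
  qed
qed

definition linF :: "(complex poly \<Rightarrow> complex) \<Rightarrow> bool" where
  "linF L \<longleftrightarrow> (\<forall>p q. L (p + q) = L p + L q) \<and> (\<forall>c p. L (smult c p) = c * L p)"

definition Qp :: "nat \<Rightarrow> (complex poly \<Rightarrow> complex) \<Rightarrow> complex poly" where
  "Qp m L = (\<Sum>k\<le>m. smult (of_nat (m choose k) * L (monom 1 k)) (monom 1 (m - k)))"

lemma linF_0: "linF L \<Longrightarrow> L 0 = 0"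
  unfolding linF_def by (metis mult_zero_left smult_0_left)

lemma linF_sum: "linF L \<Longrightarrow> L (\<Sum>i\<in>A. f i) = (\<Sum>i\<in>A. L (f i))"
proof (induction A rule: infinite_finite_induct)
  case (infinite A) thus ?case by (simp add: linF_0)
next
  case empty thus ?case by (simp add: linF_0)
next
  case (insert x F) thus ?case by (simp add: linF_def)
qed

lemma Q1: assumes "linF L" shows "poly (Qp m L) \<zeta> = L ([:\<zeta>, 1:] ^ m)"
proof -
  have "[:\<zeta>, 1:] ^ m = (\<Sum>i\<le>m. monom (coeff ([:\<zeta>, 1:] ^ m) i) i)"
    using poly_as_sum_of_monoms[of "[:\<zeta>, 1:] ^ m"] by (simp add: degree_linear_power)
  also have "\<dots> = (\<Sum>i\<le>m. smult (of_nat (m choose i) * \<zeta> ^ (m - i)) (monom 1 i))"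
    by (intro sum.cong refl) (simp add: coeff_linear_poly_power smult_monom)
  finally have e: "L ([:\<zeta>, 1:] ^ m) = (\<Sum>i\<le>m. (of_nat (m choose i) * \<zeta> ^ (m - i)) * L (monom 1 i))"
    using assms by (simp add: linF_sum linF_def)
  show ?thesis unfolding e Qp_def poly_sum
    by (intro sum.cong refl) (simp add: poly_monom)
qed

lemma pderiv_sum': "pderiv (sum f A) = (\<Sum>x\<in>A. pderiv (f x))"
  by (induction A rule: infinite_finite_induct) (simp_all add: pderiv_add)

lemma smult_sum_right: "smult c (sum f A) = (\<Sum>x\<in>A. smult c (f x))"
  by (induction A rule: infinite_finite_induct) (simp_all add: smult_add_right)

lemma Q2: "pderiv (Qp (Suc m) L) = smult (of_nat (Suc m)) (Qp m L)"
proof -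
  have "pderiv (Qp (Suc m) L) = (\<Sum>k\<le>Suc m. smult (of_nat (Suc m choose k) * L (monom 1 k)) (monom (of_nat (Suc m - k)) (m - k)))"
    unfolding Qp_def pderiv_sum'
  proof (intro sum.cong refl)
    fix k
    have e: "Suc m - k - 1 = m - k" by simp
    show "pderiv (smult (of_nat (Suc m choose k) * L (monom 1 k)) (monom 1 (Suc m - k))) =
      smult (of_nat (Suc m choose k) * L (monom 1 k)) (monom (of_nat (Suc m - k)) (m - k))"
      by (simp only: pderiv_smult pderiv_monom mult_1_right e)
  qed
  also have "\<dots> = (\<Sum>k\<le>m. smult (of_nat (Suc m choose k) * L (monom 1 k)) (monom (of_nat (Suc m - k)) (m - k)))"
    by (simp add: sum.atMost_Suc)
  also have "\<dots> = (\<Sum>k\<le>m. smult (of_nat (Suc m)) (smult (of_nat (m choose k) * L (monom 1 k)) (monom 1 (m - k))))"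
  proof (intro sum.cong refl)
    fix k assume "k \<in> {..m}"
    have b0: "(Suc m - k) * (Suc m choose k) = Suc m * (m choose k)"
      using binomial_absorb_comp[of "Suc m" k] by simp
    have b: "of_nat (Suc m - k) * (of_nat (Suc m choose k) :: complex) = of_nat (Suc m) * of_nat (m choose k)"
      by (simp only: of_nat_mult[symmetric] b0)
    have c: "of_nat (Suc m choose k) * L (monom 1 k) * of_nat (Suc m - k) = of_nat (Suc m) * (of_nat (m choose k) * L (monom 1 k) * 1)"
      using b by (simp only: mult_1_right mult_1_left ac_simps)
    show "smult (of_nat (Suc m choose k) * L (monom 1 k)) (monom (of_nat (Suc m - k)) (m - k)) =
          smult (of_nat (Suc m)) (smult (of_nat (m choose k) * L (monom 1 k)) (monom 1 (m - k)))"
      by (simp only: smult_monom c)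
  qed
  also have "\<dots> = smult (of_nat (Suc m)) (Qp m L)" unfolding Qp_def by (simp only: smult_sum_right)
  finally show ?thesis .
qed

lemma Q3: "degree (Qp m L) \<le> m" "coeff (Qp m L) m = L 1"
proof -
  show "degree (Qp m L) \<le> m" unfolding Qp_def
    by (intro degree_sum_le) (auto intro: order_trans[OF degree_smult_le] simp: degree_monom_eq)
  have "coeff (Qp m L) m = (\<Sum>k\<le>m. if k = 0 then L 1 else 0)"
    unfolding Qp_def coeff_sum by (intro sum.cong refl) (auto simp: coeff_monom)
  also have "\<dots> = L 1" by simp
  finally show "coeff (Qp m L) m = L 1" .
qed

lemma Qdeg: "L 1 \<noteq> 0 \<Longrightarrow> degree (Qp m L) = m"
  using Q3[of m L] by (metis le_antisym le_degree)

lemma Hdown: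
  assumes lin: "linF L" and L1: "L 1 \<noteq> 0" and H: "\<forall>z. R < cmod z \<longrightarrow> L ([:z, 1:] ^ Suc k) \<noteq> 0"
  shows "\<forall>z. R < cmod z \<longrightarrow> L ([:z, 1:] ^ k) \<noteq> 0"
proof (intro allI impI)
  fix z assume z: "R < cmod z"
  define p where "p = Qp (Suc k) L"
  have dp: "degree p \<ge> 1" unfolding p_def using Qdeg[where L=L, OF L1] by simp
  have nz: "\<forall>z. R < cmod z \<longrightarrow> poly p z \<noteq> 0" unfolding p_def using H Q1[OF lin] by simp
  have "poly (pderiv p) z \<noteq> 0" by (rule root_lemmas(1)[OF dp nz z])
  hence "of_nat (Suc k) * poly (Qp k L) z \<noteq> 0" unfolding p_def Q2 by simp
  thus "L ([:z, 1:] ^ k) \<noteq> 0" using Q1[OF lin] by simp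
qed

lemma Hdown_all:
  assumes lin: "linF L" and L1: "L 1 \<noteq> 0" and H: "\<forall>z. R < cmod z \<longrightarrow> L ([:z, 1:] ^ m) \<noteq> 0"
    and km: "k \<le> m"
  shows "\<forall>z. R < cmod z \<longrightarrow> L ([:z, 1:] ^ k) \<noteq> 0"
  using H km
proof (induction m)
  case 0 thus ?case by simp
next
  case (Suc m)
  show ?case
  proof (cases "k = Suc m")
    case True thus ?thesis using Suc.prems by simp
  next
    case False
    hence "k \<le> m" using Suc.prems by simp
    moreover have "\<forall>z. R < cmod z \<longrightarrow> L ([:z, 1:] ^ m) \<noteq> 0" using Hdown[OF lin L1] Suc.prems by blast
    ultimately show ?thesis using Suc.IH by blast
  qed
qed

lemma GWS:
  assumes "linF L" "L 1 \<noteq> 0" "\<forall>z. R < cmod z \<longrightarrow> L ([:z, 1:] ^ m) \<noteq> 0"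
    "\<forall>i<m. R < cmod (u i)"
  shows "L (\<Prod>i<m. [:u i, 1:]) \<noteq> 0"
  using assms
proof (induction m arbitrary: L)
  case 0 thus ?case by simp
next
  case (Suc m L)
  note lin = Suc.prems(1) and L1 = Suc.prems(2) and H = Suc.prems(3) and U = Suc.prems(4)
  define \<alpha> where "\<alpha> = u m"
  have aR: "R < cmod \<alpha>" using U unfolding \<alpha>_def by simp
  define L' where "L' g = L ([:\<alpha>, 1:] * g)" for g
  have lin': "linF L'" using lin unfolding linF_def L'_def by (simp add: distrib_left mult_smult_right)
  have "\<forall>z. R < cmod z \<longrightarrow> L ([:z, 1:] ^ 1) \<noteq> 0" by (rule Hdown_all[OF lin L1 H]) simp
  hence L1': "L' 1 \<noteq> 0" unfolding L'_def using aR by simp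
  have H': "\<forall>z. R < cmod z \<longrightarrow> L' ([:z, 1:] ^ m) \<noteq> 0"
  proof (intro allI impI)
    fix z assume z: "R < cmod z"
    define Q where "Q = Qp (Suc m) L"
    have dQ: "degree Q \<ge> 1" unfolding Q_def using Qdeg[where L=L, OF L1] by simp
    have nz: "\<forall>z. R < cmod z \<longrightarrow> poly Q z \<noteq> 0" unfolding Q_def using H Q1[OF lin] by simp
    have ne: "of_nat (degree Q) * poly Q z + (\<alpha> - z) * poly (pderiv Q) z \<noteq> 0"
      by (rule root_lemmas(2)[OF dQ nz z aR])
    have "[:\<alpha>, 1:] * [:z, 1:] ^ m = [:z, 1:] ^ Suc m + smult (\<alpha> - z) ([:z, 1:] ^ m)"
      by (simp add: algebra_simps smult_add_left[symmetric])
    hence "L' ([:z, 1:] ^ m) = poly Q z + (\<alpha> - z) * poly (Qp m L) z"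
      unfolding L'_def Q_def using lin by (simp add: linF_def Q1)
    moreover have "of_nat (degree Q) * poly Q z + (\<alpha> - z) * poly (pderiv Q) z
       = of_nat (Suc m) * (poly Q z + (\<alpha> - z) * poly (Qp m L) z)"
      unfolding Q_def Q2 Qdeg[where L=L, OF L1] by (simp add: algebra_simps)
    ultimately show "L' ([:z, 1:] ^ m) \<noteq> 0" using ne by auto
  qed
  have "L' (\<Prod>i<m. [:u i, 1:]) \<noteq> 0" using Suc.IH[OF lin' L1' H'] U by simp
  thus ?case unfolding L'_def \<alpha>_def by (simp add: mult.commute)
qed



lemma Dop_add: "Dop n a (p + q) = Dop n a p + Dop n a q"
  unfolding Dop_def by (simp add: higher_pderiv_add smult_add_right sum.distrib)

lemma Dop_smult: "Dop n a (smult c p) = smult c (Dop n a p)"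
  unfolding Dop_def by (simp add: higher_pderiv_smult smult_sum_right ac_simps)

lemma Dop_0: "Dop n a 0 = 0"
  unfolding Dop_def by simp

lemma higher_pderiv_pcompose: "(pderiv ^^ k) (pcompose p [:c, 1:]) = pcompose ((pderiv ^^ k) p) [:c, 1:]"
proof (induction k)
  case 0 thus ?case by simp
next
  case (Suc k)
  have pd: "pderiv [:c, 1:] = 1" by (simp add: pderiv_pCons)
  show ?case using Suc by (simp add: pderiv_pcompose pd)
qed

lemma Dop_pcompose: "Dop n a (pcompose p [:c, 1:]) = pcompose (Dop n a p) [:c, 1:]"
  unfolding Dop_def by (simp add: higher_pderiv_pcompose pcompose_sum pcompose_smult)

lemma pderiv_Dop: "pderiv (Dop n a p) = Dop n a (pderiv p)"
  unfolding Dop_def by (simp add: pderiv_sum' pderiv_smult funpow_swap1)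

lemma pderiv_phi: "pderiv (phi (Suc m)) = phi m"
proof -
  have "of_nat (Suc m) * (1 / of_nat (fact (Suc m))) = (1 / of_nat (fact m) :: complex)"
  proof -
    have h1: "of_nat (fact (Suc m)) = (of_nat (Suc m) * of_nat (fact m) :: complex)"
      by (simp only: fact_Suc of_nat_mult of_nat_id)
    have h2: "of_nat (Suc m) \<noteq> (0::complex)" by (rule of_nat_neq_0)
    have h3: "of_nat (fact m) \<noteq> (0::complex)" by simp
    show ?thesis unfolding h1 using h2 h3 by (simp del: of_nat_Suc fact_Suc)
  qed
  thus ?thesis unfolding phi_def by (simp only: pderiv_monom diff_Suc_1)
qed

lemma coeff_Dop_deg: "coeff (Dop n a p) (degree p) = a 0 * lead_coeff p"
proof -
  have "coeff (Dop n a p) (degree p) = (\<Sum>k\<le>n. if k = 0 then a 0 * lead_coeff p else 0)"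
    unfolding Dop_def coeff_sum
  proof (intro sum.cong refl)
    fix k assume "k \<in> {..n}"
    show "coeff (smult (a k) ((pderiv ^^ k) p)) (degree p) = (if k = 0 then a 0 * lead_coeff p else 0)"
    proof (cases "k = 0")
      case False
      hence "coeff p (degree p + k) = 0" by (simp add: coeff_eq_0)
      thus ?thesis using False by (simp add: coeff_higher_pderiv)
    qed simp
  qed
  also have "\<dots> = a 0 * lead_coeff p" by simp
  finally show ?thesis .
qed

lemma degree_Dop_le: "degree (Dop n a p) \<le> degree p"
  unfolding Dop_def
  by (intro degree_sum_le) (auto intro: order_trans[OF degree_smult_le] simp: degree_higher_pderiv)

lemma degree_Dop: "a 0 \<noteq> 0 \<Longrightarrow> p \<noteq> 0 \<Longrightarrow> degree (Dop n a p) = degree p"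
  using coeff_Dop_deg[of n a p] degree_Dop_le[of n a p]
  by (metis le_antisym le_degree leading_coeff_0_iff mult_eq_0_iff)

lemma Dop_1: "Dop n a 1 = [:a 0:]"
proof -
  have "degree (Dop n a 1) = 0" using degree_Dop_le[of n a 1] by simp
  moreover have "coeff (Dop n a 1) 0 = a 0" using coeff_Dop_deg[of n a 1] by simp
  ultimately show ?thesis by (metis degree_0_id)
qed

lemma phi_ne: "phi m \<noteq> 0" unfolding phi_def by simp
lemma degree_phi: "degree (phi m) = m" unfolding phi_def by (simp add: degree_monom_eq)

lemma pc_pow: "pcompose ([:0, 1:] ^ m) q = q ^ m"
  by (induction m) (simp_all add: pcompose_mult pcompose_1 pcompose_pCons)

lemma monom_phi: "monom 1 m = smult (fact m) (phi m)"
  unfolding phi_def by (simp add: smult_monom)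



lemma GL_chain:
  assumes a0: "a 0 \<noteq> 0" and Hp: "\<forall>z. R < cmod z \<longrightarrow> poly (Dop n a (phi n)) z \<noteq> 0"
  shows "m \<le> n \<Longrightarrow> \<forall>z. R < cmod z \<longrightarrow> poly (Dop n a (phi m)) z \<noteq> 0"
proof -
  have "\<forall>z. R < cmod z \<longrightarrow> poly (Dop n a (phi (n - k))) z \<noteq> 0" if "k \<le> n" for k
    using that
  proof (induction k)
    case 0 thus ?case using Hp by simp
  next
    case (Suc k)
    define m where "m = n - Suc k"
    have m1: "n - k = Suc m" using Suc.prems unfolding m_def by simp
    have H: "\<forall>z. R < cmod z \<longrightarrow> poly (Dop n a (phi (Suc m))) z \<noteq> 0" using Suc m1 by simp
    have d: "degree (Dop n a (phi (Suc m))) \<ge> 1" using degree_Dop[where a=a and n=n, OF a0 phi_ne] degree_phi by simp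
    have "pderiv (Dop n a (phi (Suc m))) = Dop n a (phi m)" by (simp add: pderiv_Dop pderiv_phi)
    thus ?case using root_lemmas(1)[OF d H] unfolding m_def by metis
  qed
  thus "m \<le> n \<Longrightarrow> \<forall>z. R < cmod z \<longrightarrow> poly (Dop n a (phi m)) z \<noteq> 0"
    by (metis diff_diff_cancel diff_le_self)
qed

lemma core:
  assumes a0: "a 0 \<noteq> 0"
    and Hm: "\<And>m. m \<le> n \<Longrightarrow> \<forall>z. R < cmod z \<longrightarrow> poly (Dop n a (phi m)) z \<noteq> 0"
    and df: "degree f \<le> n" "degree f \<ge> 1" and y: "poly (Dop n a f) y = 0"
  shows "\<exists>x. poly f x = 0 \<and> cmod (x - y) \<le> R"
proof (rule ccontr)
  assume contra: "\<not> (\<exists>x. poly f x = 0 \<and> cmod (x - y) \<le> R)"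
  define m where "m = degree f"
  obtain r where fr: "smult (lead_coeff f) (\<Prod>i<degree f. [:-r i, 1:]) = f"
    using complex_poly_decompose' by blast
  define L where "L g = poly (Dop n a (pcompose g [:-y, 1:])) y" for g
  have lin: "linF L" unfolding linF_def L_def
    by (simp add: pcompose_add Dop_add pcompose_smult Dop_smult)
  have L1: "L 1 \<noteq> 0" unfolding L_def by (simp add: pcompose_1 Dop_1 a0)
  have H: "\<forall>z. R < cmod z \<longrightarrow> L ([:z, 1:] ^ m) \<noteq> 0"
  proof (intro allI impI)
    fix z assume z: "R < cmod z"
    have "L ([:z, 1:] ^ m) = poly (Dop n a ([:z, 1:] ^ m)) 0"
      unfolding L_def Dop_pcompose poly_pcompose by simp
    also have "\<dots> = poly (Dop n a (monom 1 m)) z"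
      unfolding pc_pow[symmetric, of "[:z, 1:]" m] Dop_pcompose poly_pcompose
      by (simp add: monom_altdef)
    also have "\<dots> = fact m * poly (Dop n a (phi m)) z"
      unfolding monom_phi Dop_smult by simp
    finally show "L ([:z, 1:] ^ m) \<noteq> 0" using Hm[of m] df z unfolding m_def by simp
  qed
  define u where "u i = y - r i" for i
  have U: "\<forall>i<m. R < cmod (u i)"
  proof (intro allI impI)
    fix i assume i: "i < m"
    have "poly f (r i) = 0" using i unfolding m_def by (subst fr[symmetric]) (auto simp: poly_prod)
    hence "\<not> cmod (r i - y) \<le> R" using contra by blast
    thus "R < cmod (u i)" unfolding u_def by (simp add: norm_minus_commute)
  qed
  have "L (\<Prod>i<m. [:u i, 1:]) \<noteq> 0" by (rule GWS[OF lin L1 H U])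
  moreover have "pcompose (\<Prod>i<m. [:u i, 1:]) [:-y, 1:] = (\<Prod>i<m. [:-r i, 1:])"
    unfolding pcompose_prod u_def by (intro prod.cong refl) (simp add: pcompose_pCons)
  ultimately have "poly (Dop n a (\<Prod>i<m. [:-r i, 1:])) y \<noteq> 0" unfolding L_def by simp
  moreover have "lead_coeff f \<noteq> 0" using df by auto
  moreover have "poly (Dop n a f) y = lead_coeff f * poly (Dop n a (\<Prod>i<m. [:-r i, 1:])) y"
    unfolding m_def by (subst (1) fr[symmetric]) (simp add: Dop_smult)
  ultimately show False using y by simp
qed



lemma Z_finite: "p \<noteq> 0 \<Longrightarrow> finite (Z p)"
  unfolding Z_def by (rule poly_roots_finite)

lemma Z_not_UNIV: "p \<noteq> 0 \<Longrightarrow> Z p \<noteq> UNIV"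
  using Z_finite infinite_UNIV_char_0 by metis

lemma Z_nonempty: "degree (p :: complex poly) \<ge> 1 \<Longrightarrow> Z p \<noteq> {}"
proof -
  assume d: "degree p \<ge> 1"
  obtain r where fr: "smult (lead_coeff p) (\<Prod>i<degree p. [:-r i, 1:]) = p"
    using complex_poly_decompose' by blast
  have "poly p (r 0) = 0" using d by (subst fr[symmetric]) (auto simp: poly_prod)
  thus ?thesis unfolding Z_def by auto
qed

theorem mainTheorem4:
  fixes n :: nat and a :: "nat \<Rightarrow> complex"
  assumes "n \<ge> 1"
    and "bij_betw (Dop n a) (Pn n) (Pn n)"
  shows "Kh n (Dop n a) = ereal (rootrad (Dop n a (phi n)))
       \<and> ereal (rootrad (Dop n a (phi n))) = dh (Z (phi n)) (Z (Dop n a (phi n)))"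
proof -
  note n1 = assms(1)
  have a0: "a 0 \<noteq> 0"
  proof
    assume a00: "a 0 = 0"
    have "inj_on (Dop n a) (Pn n)" using assms(2) by (rule bij_betw_imp_inj_on)
    moreover have "1 \<in> Pn n" "0 \<in> Pn n" unfolding Pn_def by auto
    moreover have "Dop n a 1 = Dop n a 0" using a00 by (simp add: Dop_1 Dop_0)
    ultimately have "(1 :: complex poly) = 0" by (meson inj_onD)
    thus False by simp
  qed
  define p where "p = Dop n a (phi n)"
  have degp: "degree p = n" unfolding p_def using degree_Dop[where a=a and n=n, OF a0 phi_ne] degree_phi by simp
  hence p0: "p \<noteq> 0" using n1 by auto
  have finZ: "finite (Z p)" by (rule Z_finite[OF p0])
  have neZ: "Z p \<noteq> {}" using Z_nonempty degp n1 by simp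
  define R where "R = rootrad p"
  have Hp: "\<forall>z. R < cmod z \<longrightarrow> poly p z \<noteq> 0"
  proof (intro allI impI)
    fix z assume "R < cmod z"
    moreover have "poly p z = 0 \<Longrightarrow> cmod z \<le> R"
      unfolding R_def rootrad_def using finZ by (intro Max_ge) (auto simp: Z_def)
    ultimately show "poly p z \<noteq> 0" by linarith
  qed
  have R0: "R \<ge> 0"
  proof -
    obtain z where "z \<in> Z p" using neZ by blast
    hence "cmod z \<le> R" unfolding R_def rootrad_def using finZ by (intro Max_ge) auto
    thus ?thesis by (meson norm_ge_zero order_trans)
  qed
  have Hm: "\<And>m. m \<le> n \<Longrightarrow> \<forall>z. R < cmod z \<longrightarrow> poly (Dop n a (phi m)) z \<noteq> 0"
    using GL_chain[where a=a and n=n and R=R, OF a0] Hp unfolding p_def by blast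
  have Zphi: "Z (phi n) = {0}"
    unfolding Z_def phi_def using n1 by (auto simp: poly_monom)
  have second: "ereal R = dh (Z (phi n)) (Z p)"
  proof -
    have e: "(\<lambda>y. Min ((\<lambda>x. cmod (x - y)) ` {0})) = cmod" by auto
    have u: "{0::complex} \<noteq> UNIV" by (metis UNIV_I singletonD zero_neq_one)
    show ?thesis unfolding Zphi dh_def using neZ Z_not_UNIV[OF p0] u
      by (simp add: e R_def rootrad_def)
  qed
  have bound: "dh (Z f) (Z (Dop n a f)) \<le> ereal R" if f: "f \<in> Pn n" for f
  proof (cases "f = 0")
    case True
    thus ?thesis unfolding dh_def Z_def using R0 by (simp add: Dop_0)
  next
    case False
    show ?thesis
    proof (cases "degree f = 0")
      case True
      then obtain c where c: "f = [:c:]" by (metis degree_0_id)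
      hence c0: "c \<noteq> 0" using False by simp
      have "Dop n a f = [:c * a 0:]" unfolding c
        using Dop_smult[of n a c 1] by (simp add: Dop_1)
      thus ?thesis unfolding dh_def Z_def using c c0 a0 R0 by simp
    next
      case False2: False
      have df: "degree f \<le> n" "degree f \<ge> 1" using f False2 unfolding Pn_def by auto
      have dT: "degree (Dop n a f) = degree f" using degree_Dop[where a=a and n=n, OF a0 False] .
      hence T0: "Dop n a f \<noteq> 0" using df by auto
      have nf: "Z f \<noteq> {}" "Z f \<noteq> UNIV" "finite (Z f)"
        using Z_nonempty[OF df(2)] Z_not_UNIV[OF False] Z_finite[OF False] by auto
      have nT: "Z (Dop n a f) \<noteq> {}" "Z (Dop n a f) \<noteq> UNIV" "finite (Z (Dop n a f))"
        using Z_nonempty[of "Dop n a f"] dT df Z_not_UNIV[OF T0] Z_finite[OF T0] by auto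
      have "Max ((\<lambda>y. Min ((\<lambda>x. cmod (x - y)) ` Z f)) ` Z (Dop n a f)) \<le> R"
      proof (subst Max_le_iff)
        show "finite ((\<lambda>y. Min ((\<lambda>x. cmod (x - y)) ` Z f)) ` Z (Dop n a f))" using nT by simp
        show "(\<lambda>y. Min ((\<lambda>x. cmod (x - y)) ` Z f)) ` Z (Dop n a f) \<noteq> {}" using nT by simp
        show "\<forall>a\<in>(\<lambda>y. Min ((\<lambda>x. cmod (x - y)) ` Z f)) ` Z (Dop n a f). a \<le> R"
        proof
          fix t assume "t \<in> (\<lambda>y. Min ((\<lambda>x. cmod (x - y)) ` Z f)) ` Z (Dop n a f)"
          then obtain y where y: "y \<in> Z (Dop n a f)" and t: "t = Min ((\<lambda>x. cmod (x - y)) ` Z f)" by blast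
          obtain x where x: "poly f x = 0" "cmod (x - y) \<le> R"
            using core[where a=a and n=n and R=R, OF a0 Hm df] y unfolding Z_def by blast
          show "t \<le> R" unfolding t using nf x
            by (subst Min_le_iff) (auto simp: Z_def)
        qed
      qed
      thus ?thesis unfolding dh_def using nf nT by simp
    qed
  qed
  have phiP: "phi n \<in> Pn n" unfolding Pn_def by (simp add: degree_phi)
  have first: "Kh n (Dop n a) = ereal R"
  proof (rule antisym)
    show "Kh n (Dop n a) \<le> ereal R" unfolding Kh_def by (rule SUP_least) (rule bound)
    show "ereal R \<le> Kh n (Dop n a)" unfolding Kh_def second p_def
      by (rule SUP_upper[OF phiP])
  qed
  show ?thesis using first second unfolding R_def p_def by simp
qed


end
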